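(* Let $H\ge1$, $s\ge1$ be integers, $\Psi$ a positive integer with $\Psi/s^H\in\mathbb{Z}^+$, $q>0$, $\rho\in(0,1]$, and $w_1,\dots,w_s$ fixed real numbers. Let $\{X^{(j)}_{i_1,\dots,i_H}: i_1,\dots,i_H\in\{1,\dots,s\},\ j\ge1\}$ be independent $N(0,1)$ random variables. Let $t_{i_1,\dots,i_H}\in\mathbb{Z}_{\ge0}$ be nonnegative integers with $\sum_{i_1,\dots,i_H=1}^s t_{i_1,\dots,i_H}=\Psi$, and suppose the uniformity assumption holds: there is a constant $c\ge1$ such that for all $(i_1,\dots,i_H)\in\{1,\dots,s\}^H$, \[ \frac1c\cdot\frac{\Psi}{s^H}\le t_{i_1,\dots,i_H}\le c\cdot\frac{\Psi}{s^H}. \] Define \[ Y_s=q\sum_{i_1,\dots,i_H=1}^{s}\sum_{j=1}^{t_{i_1,\dots,i_H}}X^{(j)}_{i_1,\dots,i_H}\rho\prod_{k=1}^H w_{i_k},\qquad \hat Y_s=q\sum_{i_1,\dots,i_H=1}^{s}\sum_{j=1}^{\Psi/s^H}X^{(j)}_{i_1,\dots,i_H}\rho\prod_{k=1}^H w_{i_k}. \] Then $\mathrm{corr}(\hat Y_s,Y_s)\ge \frac{1}{c^2}$.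
   Context: $\mathrm{corr}(A,B)=\frac{\mathbb{E}[(A-\mathbb{E}A)(B-\mathbb{E}B)]}{\mathrm{std}(A)\,\mathrm{std}(B)}$. In the paper's setting, $Y_s$ is the expected output of a network whose weights take $s$ distinct values $w_1,\dots,w_s$, $t_{i_1,\dots,i_H}$ is the number of input-to-output paths whose ordered weight sequence is $(w_{i_1},\dots,w_{i_H})$, $\Psi$ is the total number of paths, and both $Y_s$ and $\hat Y_s$ are built from the same family of Gaussian variables $X^{(j)}_{i_1,\dots,i_H}$. *)

theory Defs
  imports "HOL-Probability.Probability"
begin

definition corr :: "'a measure \<Rightarrow> ('a \<Rightarrow> real) \<Rightarrow> ('a \<Rightarrow> real) \<Rightarrow> real" where
  "corr M A B =
     (\<integral>x. (A x - (\<integral>y. A y \<partial>M)) * (B x - (\<integral>y. B y \<partial>M)) \<partial>M) /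
     (sqrt (\<integral>x. (A x - (\<integral>y. A y \<partial>M))\<^sup>2 \<partial>M) * sqrt (\<integral>x. (B x - (\<integral>y. B y \<partial>M))\<^sup>2 \<partial>M))"

definition idx :: "nat \<Rightarrow> nat \<Rightarrow> nat list set" where
  "idx H s = {xs. length xs = H \<and> set xs \<subseteq> {1..s}}"

end

theory Submission imports Defs begin
lemma (in prob_space) lin_comb_cov:
  fixes Z :: "'i \<Rightarrow> 'a \<Rightarrow> real"
  assumes sq: "\<And>i k. i\<in>I \<Longrightarrow> k\<in>I \<Longrightarrow> integrable M (\<lambda>x. Z i x * Z k x) \<and> (\<integral>x. Z i x * Z k x \<partial>M) = (if i = k then 1 else 0)"
    and fin: "finite A" "finite B" and sub: "A \<subseteq> I" "B \<subseteq> I"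
  shows "(\<integral>x. (\<Sum>i\<in>A. f i * Z i x) * (\<Sum>k\<in>B. g k * Z k x) \<partial>M) = (\<Sum>i\<in>A\<inter>B. f i * g i)"
proof -
  have "(\<lambda>x. (\<Sum>i\<in>A. f i * Z i x) * (\<Sum>k\<in>B. g k * Z k x)) = (\<lambda>x. \<Sum>i\<in>A. \<Sum>k\<in>B. (f i * g k) * (Z i x * Z k x))"
    by (simp add: sum_product algebra_simps)
  then have "(\<integral>x. (\<Sum>i\<in>A. f i * Z i x) * (\<Sum>k\<in>B. g k * Z k x) \<partial>M) = (\<Sum>i\<in>A. \<Sum>k\<in>B. (f i * g k) * (\<integral>x. Z i x * Z k x \<partial>M))"
    using sq sub by (simp add: integral_sum subsetD)
  also have "\<dots> = (\<Sum>i\<in>A. \<Sum>k\<in>B. if i = k then f i * g k else 0)"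
    using sq sub by (intro sum.cong refl) (auto simp: subsetD)
  also have "\<dots> = (\<Sum>i\<in>A. if i \<in> B then f i * g i else 0)"
    using fin by (simp add: sum.delta)
  also have "\<dots> = (\<Sum>i\<in>A\<inter>B. f i * g i)"
    using fin by (simp add: sum.inter_restrict)
  finally show ?thesis .
qed

lemma (in prob_space) lin_comb_mean:
  fixes Z :: "'i \<Rightarrow> 'a \<Rightarrow> real"
  assumes "\<And>i. i\<in>A \<Longrightarrow> integrable M (Z i) \<and> (\<integral>x. Z i x \<partial>M) = 0"
  shows "(\<integral>x. (\<Sum>i\<in>A. f i * Z i x) \<partial>M) = 0"
  using assms by (simp add: integral_sum)

lemma (in prob_space) std_normal_facts:
  assumes D: "distributed M lborel Z std_normal_density"
  shows "integrable M Z" "(\<integral>x. Z x \<partial>M) = 0" "integrable M (\<lambda>x. Z x * Z x)" "(\<integral>x. Z x * Z x \<partial>M) = 1"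
proof -
  have i1: "integrable lborel (\<lambda>x. std_normal_density x * x)"
    using integrable_std_normal_moment[of 1] by simp
  show "integrable M Z"
    using distributed_integrable[OF D, of "\<lambda>x. x"] i1 by simp
  show "(\<integral>x. Z x \<partial>M) = 0"
    using standard_normal_distributed_expectation[OF D] by simp
  have i2: "integrable lborel (\<lambda>x. std_normal_density x * (x * x))"
    using integrable_std_normal_moment[of 2] by (simp add: power2_eq_square)
  show "integrable M (\<lambda>x. Z x * Z x)"
    using distributed_integrable[OF D, of "\<lambda>x. x * x"] i2 by simp
  have "(\<integral>x. std_normal_density x * (x * x) \<partial>lborel) = 1"
    using integral_std_normal_moment_even[of 1] by (simp add: power2_eq_square)
  then show "(\<integral>x. Z x * Z x \<partial>M) = 1"
    using distributed_integral[OF D, of "\<lambda>x. x * x"] by simp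
qed

lemma (in prob_space) indep_pair:
  fixes Z :: "'i \<Rightarrow> 'a \<Rightarrow> real"
  assumes ind: "indep_vars (\<lambda>_. borel) Z I" and "i\<in>I" "k\<in>I" "i\<noteq>k"
    and "integrable M (Z i)" "integrable M (Z k)"
  shows "integrable M (\<lambda>x. Z i x * Z k x)" "(\<integral>x. Z i x * Z k x \<partial>M) = (\<integral>x. Z i x \<partial>M) * (\<integral>x. Z k x \<partial>M)"
proof -
  have ind2: "indep_vars (\<lambda>_. borel) Z {i,k}"
    using indep_vars_subset[OF ind] assms by auto
  have int: "\<And>j. j \<in> {i,k} \<Longrightarrow> integrable M (Z j)" using assms by auto
  show "integrable M (\<lambda>x. Z i x * Z k x)"
    using indep_vars_integrable[OF _ ind2 int] assms by simp
  show "(\<integral>x. Z i x * Z k x \<partial>M) = (\<integral>x. Z i x \<partial>M) * (\<integral>x. Z k x \<partial>M)"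
    using indep_vars_lebesgue_integral[OF _ ind2 int] assms by simp
qed

lemma finite_idx: "finite (idx H s)"
proof -
  have "idx H s = {xs. set xs \<subseteq> {1..s} \<and> length xs = H}" by (auto simp: idx_def)
  then show ?thesis using finite_lists_length_eq[of "{1..s}" H] by simp
qed

theorem theorem3p3:
  fixes M :: "'a measure"
    and H s \<Psi> :: nat
    and q \<rho> c :: real
    and w :: "nat \<Rightarrow> real"
    and X :: "nat list \<Rightarrow> nat \<Rightarrow> 'a \<Rightarrow> real"
    and t :: "nat list \<Rightarrow> nat"
  assumes "prob_space M"
    and "H \<ge> 1" and "s \<ge> 1"
    and "\<Psi> > 0" and "s ^ H dvd \<Psi>"
    and "q > 0" and "0 < \<rho>" and "\<rho> \<le> 1"
    and "\<exists>i\<in>{1..s}. w i \<noteq> 0"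
    and "prob_space.indep_vars M (\<lambda>_. borel) (\<lambda>(xs, j). X xs j) (idx H s \<times> {1..})"
    and "\<And>xs j. xs \<in> idx H s \<Longrightarrow> j \<ge> 1 \<Longrightarrow> distributed M lborel (X xs j) std_normal_density"
    and "(\<Sum>xs\<in>idx H s. t xs) = \<Psi>"
    and "c \<ge> 1"
    and "\<And>xs. xs \<in> idx H s \<Longrightarrow>
           1 / c * (real \<Psi> / real s ^ H) \<le> real (t xs) \<and> real (t xs) \<le> c * (real \<Psi> / real s ^ H)"
  shows "corr M
     (\<lambda>x. q * (\<Sum>xs\<in>idx H s. \<Sum>j\<in>{1..\<Psi> div s ^ H}. X xs j x * \<rho> * prod_list (map w xs)))
     (\<lambda>x. q * (\<Sum>xs\<in>idx H s. \<Sum>j\<in>{1..t xs}. X xs j x * \<rho> * prod_list (map w xs)))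
     \<ge> 1 / c ^ 2"
proof -
  interpret P: prob_space M by fact
  define I where "I = idx H s \<times> ({1..} :: nat set)"
  define Z where "Z = (\<lambda>(xs, j). X xs j)"
  define m where "m = \<Psi> div s ^ H"
  define f where "f = (\<lambda>p::nat list \<times> nat. q * \<rho> * prod_list (map w (fst p)))"
  define A where "A = Sigma (idx H s) (\<lambda>_. {1..m})"
  define B where "B = Sigma (idx H s) (\<lambda>xs. {1..t xs})"
  have ind: "P.indep_vars (\<lambda>_. borel) Z I" using assms(10) unfolding Z_def I_def .
  have D: "\<And>p. p \<in> I \<Longrightarrow> distributed M lborel (Z p) std_normal_density"
    using assms(11) by (auto simp: I_def Z_def)
  note F = P.std_normal_facts[OF D]
  have sq: "\<And>i k. i\<in>I \<Longrightarrow> k\<in>I \<Longrightarrow> integrable M (\<lambda>x. Z i x * Z k x) \<and> (\<integral>x. Z i x * Z k x \<partial>M) = (if i = k then 1 else 0)"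
  proof -
    fix i k assume ik: "i\<in>I" "k\<in>I"
    show "integrable M (\<lambda>x. Z i x * Z k x) \<and> (\<integral>x. Z i x * Z k x \<partial>M) = (if i = k then 1 else 0)"
    proof (cases "i = k")
      case True then show ?thesis using F[OF ik(1)] by simp
    next
      case False then show ?thesis
        using P.indep_pair[OF ind ik False F(1)[OF ik(1)] F(1)[OF ik(2)]] F(2)[OF ik(1)] by simp
    qed
  qed
  have finI: "finite (idx H s)" by (rule finite_idx)
  have finA: "finite A" and finB: "finite B" using finI by (auto simp: A_def B_def)
  have subA: "A \<subseteq> I" and subB: "B \<subseteq> I" by (auto simp: A_def B_def I_def)
  have eqA: "(\<lambda>x. q * (\<Sum>xs\<in>idx H s. \<Sum>j\<in>{1..\<Psi> div s ^ H}. X xs j x * \<rho> * prod_list (map w xs)))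
      = (\<lambda>x. \<Sum>p\<in>A. f p * Z p x)"
  proof
    fix x
    have "q * (\<Sum>xs\<in>idx H s. \<Sum>j\<in>{1..\<Psi> div s ^ H}. X xs j x * \<rho> * prod_list (map w xs))
       = (\<Sum>xs\<in>idx H s. \<Sum>j\<in>{1..m}. f (xs, j) * Z (xs, j) x)"
      by (simp add: sum_distrib_left f_def Z_def m_def algebra_simps)
    also have "\<dots> = (\<Sum>p\<in>A. f p * Z p x)"
      unfolding A_def by (subst sum.Sigma) (use finI in auto)
    finally show "q * (\<Sum>xs\<in>idx H s. \<Sum>j\<in>{1..\<Psi> div s ^ H}. X xs j x * \<rho> * prod_list (map w xs))
       = (\<Sum>p\<in>A. f p * Z p x)" .
  qed
  have eqB: "(\<lambda>x. q * (\<Sum>xs\<in>idx H s. \<Sum>j\<in>{1..t xs}. X xs j x * \<rho> * prod_list (map w xs)))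
      = (\<lambda>x. \<Sum>p\<in>B. f p * Z p x)"
  proof
    fix x
    have "q * (\<Sum>xs\<in>idx H s. \<Sum>j\<in>{1..t xs}. X xs j x * \<rho> * prod_list (map w xs))
       = (\<Sum>xs\<in>idx H s. \<Sum>j\<in>{1..t xs}. f (xs, j) * Z (xs, j) x)"
      by (simp add: sum_distrib_left f_def Z_def algebra_simps)
    also have "\<dots> = (\<Sum>p\<in>B. f p * Z p x)"
      unfolding B_def by (subst sum.Sigma) (use finI in auto)
    finally show "q * (\<Sum>xs\<in>idx H s. \<Sum>j\<in>{1..t xs}. X xs j x * \<rho> * prod_list (map w xs))
       = (\<Sum>p\<in>B. f p * Z p x)" .
  qed
  have mean0: "\<And>C. C \<subseteq> I \<Longrightarrow> (\<integral>x. (\<Sum>p\<in>C. f p * Z p x) \<partial>M) = 0"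
    by (rule P.lin_comb_mean) (use F in auto)
  have cov: "\<And>C E. finite C \<Longrightarrow> finite E \<Longrightarrow> C \<subseteq> I \<Longrightarrow> E \<subseteq> I \<Longrightarrow>
     (\<integral>x. (\<Sum>p\<in>C. f p * Z p x) * (\<Sum>p\<in>E. f p * Z p x) \<partial>M) = (\<Sum>p\<in>C\<inter>E. f p * f p)"
    by (rule P.lin_comb_cov[OF sq]) auto
  have cov2: "\<And>C. finite C \<Longrightarrow> C \<subseteq> I \<Longrightarrow>
     (\<integral>x. (\<Sum>p\<in>C. f p * Z p x)\<^sup>2 \<partial>M) = (\<Sum>p\<in>C. f p * f p)"
    using cov by (simp add: power2_eq_square)
  define a where "a = (\<lambda>xs. (q * \<rho> * prod_list (map w xs))\<^sup>2)"
  have sumS: "\<And>g. (\<Sum>p\<in>Sigma (idx H s) (\<lambda>xs. {1..g xs}). f p * f p) = (\<Sum>xs\<in>idx H s. a xs * real (g xs))"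
  proof -
    fix g :: "nat list \<Rightarrow> nat"
    have "(\<Sum>p\<in>Sigma (idx H s) (\<lambda>xs. {1..g xs}). f p * f p) = (\<Sum>xs\<in>idx H s. \<Sum>j\<in>{1..g xs}. f (xs,j) * f (xs,j))"
      using sum.Sigma[OF finI, of "\<lambda>xs. {1..g xs}" "\<lambda>xs j. f (xs,j) * f (xs,j)"] by (simp add: split_def)
    also have "\<dots> = (\<Sum>xs\<in>idx H s. a xs * real (g xs))"
      by (simp add: f_def a_def power2_eq_square mult.commute)
    finally show "(\<Sum>p\<in>Sigma (idx H s) (\<lambda>xs. {1..g xs}). f p * f p) = (\<Sum>xs\<in>idx H s. a xs * real (g xs))" .
  qed
  have AB: "A \<inter> B = Sigma (idx H s) (\<lambda>xs. {1..min m (t xs)})" by (auto simp: A_def B_def)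
  have sA: "(\<Sum>p\<in>A. f p * f p) = (\<Sum>xs\<in>idx H s. a xs * real m)"
    using sumS[of "\<lambda>_. m"] by (simp add: A_def)
  have sB: "(\<Sum>p\<in>B. f p * f p) = (\<Sum>xs\<in>idx H s. a xs * real (t xs))"
    using sumS[of t] by (simp add: B_def)
  have sAB: "(\<Sum>p\<in>A\<inter>B. f p * f p) = (\<Sum>xs\<in>idx H s. a xs * real (min m (t xs)))"
    unfolding AB by (rule sumS)
  have corr_eq: "corr M (\<lambda>x. \<Sum>p\<in>A. f p * Z p x) (\<lambda>x. \<Sum>p\<in>B. f p * Z p x)
     = (\<Sum>xs\<in>idx H s. a xs * real (min m (t xs))) /
       (sqrt (\<Sum>xs\<in>idx H s. a xs * real m) * sqrt (\<Sum>xs\<in>idx H s. a xs * real (t xs)))"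
    unfolding corr_def mean0[OF subA] mean0[OF subB]
    using cov[OF finA finB subA subB] cov2[OF finA subA] cov2[OF finB subB] sA sB sAB
    by simp
  have mreal: "real m = real \<Psi> / real s ^ H"
    using assms(5) unfolding m_def by (simp add: real_of_nat_div)
  have spos: "real s ^ H > 0" using assms(3) by simp
  have mpos: "real m > 0" unfolding mreal using assms(4) spos by simp
  have cpos: "c > 0" using assms(13) by simp
  have a0: "\<And>xs. a xs \<ge> 0" by (simp add: a_def)
  define S where "S = (\<Sum>xs\<in>idx H s. a xs)"
  obtain i where i: "i \<in> {1..s}" "w i \<noteq> 0" using assms(9) by blast
  have ri: "replicate H i \<in> idx H s" using i by (auto simp: idx_def)
  have "a (replicate H i) > 0" using i assms(6,7) by (simp add: a_def prod_list_replicate)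
  moreover have "a (replicate H i) \<le> S" unfolding S_def
    by (rule member_le_sum[OF ri]) (use a0 finI in auto)
  ultimately have Spos: "S > 0" by linarith
  have num: "(\<Sum>xs\<in>idx H s. a xs * real (min m (t xs))) \<ge> (\<Sum>xs\<in>idx H s. a xs * (real m / c))"
  proof (rule sum_mono)
    fix xs assume xs: "xs \<in> idx H s"
    have "real m / c \<le> real m" using mpos assms(13) by (simp add: divide_le_eq)
    moreover have "real m / c \<le> real (t xs)" using assms(14)[OF xs] mreal by (simp add: mult.commute)
    ultimately have "real m / c \<le> real (min m (t xs))" by simp
    then show "a xs * (real m / c) \<le> a xs * real (min m (t xs))" by (rule mult_left_mono[OF _ a0])
  qed
  have num2: "(\<Sum>xs\<in>idx H s. a xs * (real m / c)) = S * real m / c"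
    by (simp add: S_def sum_distrib_right sum_divide_distrib)
  have VA: "(\<Sum>xs\<in>idx H s. a xs * real m) = S * real m" by (simp add: S_def sum_distrib_right)
  have VB: "(\<Sum>xs\<in>idx H s. a xs * real (t xs)) \<le> (\<Sum>xs\<in>idx H s. a xs * (c * real m))"
  proof (rule sum_mono)
    fix xs assume xs: "xs \<in> idx H s"
    have "real (t xs) \<le> c * real m" using assms(14)[OF xs] mreal by (simp add: mult.commute)
    then show "a xs * real (t xs) \<le> a xs * (c * real m)" by (rule mult_left_mono[OF _ a0])
  qed
  have VB2: "(\<Sum>xs\<in>idx H s. a xs * (c * real m)) = c * (S * real m)" unfolding S_def sum_distrib_right[symmetric] by simp
  define N where "N = (\<Sum>xs\<in>idx H s. a xs * real (min m (t xs)))"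
  define V where "V = (\<Sum>xs\<in>idx H s. a xs * real (t xs))"
  define T where "T = S * real m"
  have Tpos: "T > 0" using Spos mpos by (simp add: T_def)
  have NT: "N \<ge> T / c" using num num2 by (simp add: N_def T_def)
  have VT: "V \<le> c * T" using VB VB2 by (simp add: V_def T_def)
  have V0: "V \<ge> 0" unfolding V_def by (rule sum_nonneg) (simp add: a0)
  have NV: "N \<le> V" unfolding N_def V_def
    by (rule sum_mono) (rule mult_left_mono[OF _ a0], simp)
  have "T / c > 0" using Tpos cpos by simp
  then have Vpos: "V > 0" using NT NV by linarith
  have d: "sqrt T * sqrt V \<le> sqrt T * sqrt (c * T)"
    using VT Tpos by (simp add: mult_left_mono)
  have d2: "sqrt T * sqrt (c * T) = sqrt c * T"
    using Tpos cpos by (simp add: real_sqrt_mult algebra_simps)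
  have dpos: "sqrt T * sqrt V > 0" using Tpos Vpos by simp
  have "1 / c ^ 2 \<le> 1 / (c * sqrt c)"
  proof -
    have s1: "sqrt c \<ge> 1" using assms(13) by simp
    have "sqrt c * 1 \<le> sqrt c * sqrt c" using s1 by (intro mult_left_mono) auto
    then have "sqrt c \<le> c" using cpos by simp
    then have "c * sqrt c \<le> c ^ 2" using cpos by (simp add: power2_eq_square)
    then show ?thesis using cpos by (simp add: frac_le)
  qed
  also have "1 / (c * sqrt c) = (T / c) / (sqrt c * T)" using Tpos cpos by simp
  also have "\<dots> \<le> N / (sqrt c * T)" by (rule divide_right_mono[OF NT]) (use Tpos cpos in simp)
  also have "\<dots> \<le> N / (sqrt T * sqrt V)"
    using d d2 dpos NT \<open>T / c > 0\<close> by (intro divide_left_mono) auto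
  finally show ?thesis unfolding eqA eqB corr_eq N_def[symmetric] V_def[symmetric] VA T_def[symmetric] .
qed

end
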